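(* Let $n\in\mathbb{N}$, $\Delta T>0$, $D\subset\mathbb{R}^{2n}$, and let $\Phi^{\Delta T}:D\to\mathbb{R}^{2n}$ be the time-$\Delta T$ flow map of a Hamiltonian system. Let $\Omega:=\{I_1x_0+I_2\Phi^{\Delta T}(x_0):x_0\in D\}$ be open and convex, and let $S^{\Delta T}\in C^2(\Omega)\cap H_k(\Omega)$ be a type II generating function of $\Phi^{\Delta T}$ on $\Omega$ (see context). Let $u:=S^{\Delta T}$ and run the gradient Hermite–Birkhoff $f$-greedy algorithm (see context) with index set $\mathcal J=\{1,\dots,2n\}$, producing selected pairs $(x_i,\ell_i)$, surrogates $s_i$ and errors $e_i=S^{\Delta T}-s_i$. For each $m\ge1$ choose $i_m\in\{m+1,\dots,2m\}$ with $\|\nabla e_{i_m}\|_{L^\infty(\Omega)}=\min_{m+1\le i\le 2m}\|\nabla e_i\|_{L^\infty(\Omega)}$. Fix a compact set $K\subset\mathbb{R}^{2n}$ and assume: (i) (Uniform solvability) for every $x_0\in K$ and every $m$ sufficiently large, the implicit equations $y=x_0+\Delta T J_{2n}\nabla S^{\Delta T}(I_1x_0+I_2y)$ and $y=x_0+\Delta T J_{2n}\nabla s_{i_m}(I_1x_0+I_2y)$ have unique solutions $y^\ast=\Phi^{\Delta T}(x_0)$ and $y_m=:x_{\Delta T,i_m}(x_0)$ respectively, with $I_1x_0+I_2y^\ast\in\Omega$ and $I_1x_0+I_2y_m\in\Omega$; (ii) (Uniform Lipschitz continuity in $y$) there is $L_S>0$ with $\sup_{x_0\in K,\ y:\ I_1x_0+I_2y\in\Omega}\|\nabla^2S^{\Delta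 T}(I_1x_0+I_2y)\,I_2\|_2=L_S<\infty$. Assume $\Delta T<1/L_S$. Then there exists a constant $C>0$, independent of $m$ and $x_0$, such that (for all $m$ sufficiently large as in (i)) \[ \sup_{x_0\in K}\|x_{\Delta T,i_m}(x_0)-\Phi^{\Delta T}(x_0)\|_2\le C\,\Delta T\,\sqrt{2n}\,m^{-1/2}\,\|e_{m+1}\|_{H_k(\Omega)}\left[\prod_{i=m+1}^{2m}P_i(x_{i+1},\ell_{i+1})\right]^{1/m}. \]
   Context: $J_{2n}=\begin{bmatrix}0_n&I_n\\-I_n&0_n\end{bmatrix}$; $I_1=\begin{bmatrix}I_n&0\\0&0\end{bmatrix}$, $I_2=\begin{bmatrix}0&0\\0&I_n\end{bmatrix}$. A Hamiltonian system is $\dot x=J_{2n}\nabla\mathcal H(x)$ for $x=(q,p)\in\mathbb{R}^{2n}$, and $\Phi^{\Delta T}(x_0)$ is its solution at time $\Delta T$ with initial value $x_0$. A type II generating function of $\Phi^{\Delta T}$ on $\Omega$ is a function $S^{\Delta T}\in H_k(\Omega)\cap C^1(\Omega)$ with $J_{2n}^\top\frac{\Phi^{\Delta T}(x_0)-x_0}{\Delta T}=\nabla S^{\Delta T}(I_1x_0+I_2\Phi^{\Delta T}(x_0))$ for all $x_0\in D$. Kernel assumptions: $k$ is a symmetric positive definite kernel on $\Omega$ with RKHS $H_k(\Omega)$, $k\in C^2(\Omega\times\Omega)$, and for all $x\in\Omega$, $\ell\in\mathcal J$, $\partial^{(2)}_\ell k(\cdot,x)\in H_k(\Omega)$ with $\partial_\ell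 f(x)=\langle f,\partial^{(2)}_\ell k(\cdot,x)\rangle_{H_k(\Omega)}$ for all $f\in H_k(\Omega)$ ($\partial^{(2)}_\ell$ = derivative in the second argument). Greedy algorithm: for a selection $\{(x_i,\ell_i)\}_{i=1}^m\subset\Omega\times\mathcal J$, $V_m:=\operatorname{span}\{\partial^{(2)}_{\ell_i}k(\cdot,x_i)\}_{i=1}^m$ ($V_0=\{0\}$), $\Pi_m$ the orthogonal projector of $H_k(\Omega)$ onto $V_m$, $s_m:=\Pi_m u$, $e_m:=u-s_m$; starting from $m=0$, for each $m\ge0$ choose $(x_{m+1},\ell_{m+1})\in\operatorname{argmax}_{x\in\Omega,\ell\in\mathcal J}|\partial_\ell e_m(x)|$ (maximizers assumed to exist). Power function: $P_m(x,\ell):=\|(I-\Pi_m)\partial^{(2)}_\ell k(\cdot,x)\|_{H_k(\Omega)}$. $\|\nabla e\|_{L^\infty(\Omega)}:=\sup_{x\in\Omega}\|\nabla e(x)\|_2$. *)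

theory Defs
  imports "HOL-Analysis.Analysis"
begin

text \<open>Phase space R^{2n} = R^n x R^n, x = (q,p); the product norm is the Euclidean 2-norm.\<close>
type_synonym 'n ps = "(real^'n) \<times> (real^'n)"

definition Jmat :: "'n::finite ps \<Rightarrow> 'n ps" where
  "Jmat x = (snd x, - fst x)"

definition JmatT :: "'n::finite ps \<Rightarrow> 'n ps" where
  "JmatT x = (- snd x, fst x)"

definition I1 :: "'n::finite ps \<Rightarrow> 'n ps" where "I1 x = (fst x, 0)"
definition I2 :: "'n::finite ps \<Rightarrow> 'n ps" where "I2 x = (0, snd x)"

definition pdir :: "('a::euclidean_space \<Rightarrow> real) \<Rightarrow> 'a \<Rightarrow> 'a \<Rightarrow> real" where
  "pdir f x l = deriv (\<lambda>t. f (x + t *\<^sub>R l)) 0"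

definition grad_of :: "('a::euclidean_space \<Rightarrow> real) \<Rightarrow> 'a \<Rightarrow> 'a" where
  "grad_of f x = (\<Sum>b\<in>Basis. pdir f x b *\<^sub>R b)"

definition hess_app :: "('a::euclidean_space \<Rightarrow> real) \<Rightarrow> 'a \<Rightarrow> 'a \<Rightarrow> 'a" where
  "hess_app f z v = (\<Sum>i\<in>Basis. (\<Sum>j\<in>Basis. pdir (\<lambda>w. pdir f w i) z j * (v \<bullet> j)) *\<^sub>R i)"

definition C1_on :: "'a::euclidean_space set \<Rightarrow> ('a \<Rightarrow> real) \<Rightarrow> bool" where
  "C1_on U f \<longleftrightarrow> (\<forall>b\<in>Basis. (\<forall>z\<in>U. (\<lambda>t. f (z + t *\<^sub>R b)) differentiable (at 0))
                              \<and> continuous_on U (\<lambda>z. pdir f z b))"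

definition C2_on :: "'a::euclidean_space set \<Rightarrow> ('a \<Rightarrow> real) \<Rightarrow> bool" where
  "C2_on U f \<longleftrightarrow> C1_on U f \<and> (\<forall>b\<in>Basis. C1_on U (\<lambda>z. pdir f z b))"

definition is_ham_flow :: "('n::finite ps \<Rightarrow> real) \<Rightarrow> real \<Rightarrow> 'n ps set \<Rightarrow> ('n ps \<Rightarrow> 'n ps) \<Rightarrow> bool" where
  "is_ham_flow H dT D Phi \<longleftrightarrow> C1_on UNIV H \<and>
     (\<forall>x0\<in>D. \<exists>x::real \<Rightarrow> 'n ps. x 0 = x0 \<and> x dT = Phi x0 \<and>
        (\<forall>t\<in>{0..dT}. (x has_vector_derivative Jmat (grad_of H (x t))) (at t within {0..dT})))"

definition spd_kernel :: "'a set \<Rightarrow> ('a \<Rightarrow> 'a \<Rightarrow> real) \<Rightarrow> bool" where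
  "spd_kernel U k \<longleftrightarrow> (\<forall>x\<in>U. \<forall>y\<in>U. k x y = k y x) \<and>
     (\<forall>X c. finite X \<longrightarrow> X \<subseteq> U \<longrightarrow> (\<exists>x\<in>X. c x \<noteq> (0::real)) \<longrightarrow>
        (\<Sum>x\<in>X. \<Sum>y\<in>X. c x * c y * k x y) > 0)"

text \<open>RKHS H_k(U), represented by a Hilbert space 'h and the map kx x = k(.,x) in 'h:
  an element f of 'h is the function z \<mapsto> <f, kx z> on U (reproducing property),
  k(x,y) = <kx x, kx y>, and the kernel sections are dense (so f is determined by its
  values on U, i.e. 'h is isometric to the RKHS of k on U).\<close>
definition is_rkhs :: "'a set \<Rightarrow> ('a \<Rightarrow> 'a \<Rightarrow> real) \<Rightarrow> ('a \<Rightarrow> 'h::{real_inner,complete_space}) \<Rightarrow> bool" where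
  "is_rkhs U k kx \<longleftrightarrow> (\<forall>x\<in>U. \<forall>y\<in>U. k x y = kx x \<bullet> kx y) \<and> closure (span (kx ` U)) = UNIV"

definition fn_of :: "('a \<Rightarrow> 'h::real_inner) \<Rightarrow> 'h \<Rightarrow> 'a \<Rightarrow> real" where
  "fn_of kx f = (\<lambda>z. f \<bullet> kx z)"

definition orth_proj :: "'h::real_inner set \<Rightarrow> 'h \<Rightarrow> 'h" where
  "orth_proj V u = (THE v. v \<in> V \<and> (\<forall>w\<in>V. (u - v) \<bullet> w = 0))"

definition gspace :: "('a \<Rightarrow> 'a \<Rightarrow> 'h::real_vector) \<Rightarrow> (nat \<Rightarrow> 'a) \<Rightarrow> (nat \<Rightarrow> 'a) \<Rightarrow> nat \<Rightarrow> 'h set" where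
  "gspace dK xs ls m = span ((\<lambda>i. dK (xs i) (ls i)) ` {1..m})"

definition gen_fun_II :: "real \<Rightarrow> 'n::finite ps set \<Rightarrow> ('n ps \<Rightarrow> 'n ps) \<Rightarrow> 'n ps set \<Rightarrow> ('n ps \<Rightarrow> real) \<Rightarrow> bool" where
  "gen_fun_II dT D Phi U S \<longleftrightarrow> C1_on U S \<and>
     (\<forall>x0\<in>D. JmatT ((1 / dT) *\<^sub>R (Phi x0 - x0)) = grad_of S (I1 x0 + I2 (Phi x0)))"

definition Linf_grad :: "'a::euclidean_space set \<Rightarrow> ('a \<Rightarrow> real) \<Rightarrow> ereal" where
  "Linf_grad U f = (SUP z\<in>U. ereal (norm (grad_of f z)))"

end

theory Submission
  imports Defs
begin

definition isproj :: "'h::real_inner set \<Rightarrow> 'h \<Rightarrow> 'h \<Rightarrow> bool" where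
  "isproj V u v \<longleftrightarrow> v \<in> V \<and> (\<forall>w\<in>V. (u - v) \<bullet> w = 0)"

lemma proj_unique:
  assumes "subspace V" "isproj V u v"
  shows "orth_proj V u = v"
  unfolding orth_proj_def
proof (rule the_equality)
  show "v \<in> V \<and> (\<forall>w\<in>V. (u - v) \<bullet> w = 0)" using assms(2) by (simp add: isproj_def)
next
  fix v' assume h: "v' \<in> V \<and> (\<forall>w\<in>V. (u - v') \<bullet> w = 0)"
  have d: "v - v' \<in> V" using h assms by (simp add: isproj_def subspace_diff)
  have "(v - v') \<bullet> (v - v') = (u - v') \<bullet> (v - v') - (u - v) \<bullet> (v - v')"
    by (simp add: inner_diff_left)
  also have "\<dots> = 0" using h assms(2) d by (simp add: isproj_def)
  finally show "v' = v" by simp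
qed

lemma proj_step:
  fixes V :: "'h::real_inner set"
  assumes sV: "subspace V" and pu: "isproj V u p" and pw: "isproj V w pw"
  defines "q \<equiv> w - pw"
  defines "p' \<equiv> p + (if q = 0 then 0 else ((u \<bullet> q) / (q \<bullet> q)) *\<^sub>R q)"
  shows "isproj (span (insert w V)) u p'"
    and "(u - p) \<bullet> w = (u - p) \<bullet> q"
    and "q = 0 \<Longrightarrow> (u - p) \<bullet> w = 0"
    and "q \<noteq> 0 \<Longrightarrow> norm (u - p') ^ 2 = norm (u - p) ^ 2 - ((u - p) \<bullet> w)^2 / (norm q)^2"
    and "q = 0 \<Longrightarrow> u - p' = u - p"
proof -
  have spV: "span V = V" using sV by (simp add: span_eq_iff)
  have pV: "p \<in> V" and pwV: "pw \<in> V" using pu pw by (auto simp: isproj_def)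
  have oq: "\<And>y. y \<in> V \<Longrightarrow> q \<bullet> y = 0" using pw by (simp add: isproj_def q_def)
  have ou: "\<And>y. y \<in> V \<Longrightarrow> (u - p) \<bullet> y = 0" using pu by (simp add: isproj_def)
  have pq: "p \<bullet> q = 0" using oq pV by (simp add: inner_commute)
  show e1: "(u - p) \<bullet> w = (u - p) \<bullet> q"
    using ou[OF pwV] by (simp add: q_def inner_diff_right)
  show e2: "q = 0 \<Longrightarrow> (u - p) \<bullet> w = 0" using e1 by simp
  show "q = 0 \<Longrightarrow> u - p' = u - p" by (simp add: p'_def)
  show "q \<noteq> 0 \<Longrightarrow> norm (u - p') ^ 2 = norm (u - p) ^ 2 - ((u - p) \<bullet> w)^2 / (norm q)^2"
  proof -
    assume q0: "q \<noteq> 0"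
    define c where "c = (u \<bullet> q) / (q \<bullet> q)"
    have uq: "u \<bullet> q = (u - p) \<bullet> q" using pq by (simp add: inner_diff_left)
    have qq: "q \<bullet> q = (norm q)^2" by (simp add: power2_norm_eq_inner)
    have qpos: "q \<bullet> q > 0" using q0 by simp
    have "norm (u - p') ^ 2 = (u - p - c *\<^sub>R q) \<bullet> (u - p - c *\<^sub>R q)"
      by (simp add: p'_def q0 c_def power2_norm_eq_inner algebra_simps)
    also have "\<dots> = (u - p) \<bullet> (u - p) - 2 * c * ((u - p) \<bullet> q) + c^2 * (q \<bullet> q)"
      by (simp add: inner_diff_left inner_diff_right power2_eq_square inner_commute algebra_simps)
    also have "\<dots> = norm (u - p) ^ 2 - 2 * c * ((u - p) \<bullet> q) + c^2 * (q \<bullet> q)"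
      by (simp add: power2_norm_eq_inner)
    also have "\<dots> = norm (u - p) ^ 2 - ((u - p) \<bullet> q)^2 / (q \<bullet> q)"
      using qpos by (simp add: c_def uq field_simps power2_eq_square)
    finally show ?thesis using e1 qq by simp
  qed
  show "isproj (span (insert w V)) u p'"
    unfolding isproj_def
  proof (intro conjI ballI)
    show "p' \<in> span (insert w V)"
    proof (cases "q = 0")
      case True then show ?thesis using pV by (simp add: p'_def span_base)
    next
      case False
      have "p - ((u \<bullet> q) / (q \<bullet> q)) *\<^sub>R pw \<in> V" using pV pwV sV
        by (simp add: subspace_diff subspace_scale)
      then have "p' - ((u \<bullet> q) / (q \<bullet> q)) *\<^sub>R w \<in> V"
        using False by (simp add: p'_def q_def algebra_simps)
      then show ?thesis unfolding span_insert spV by blast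
    qed
  next
    fix y assume "y \<in> span (insert w V)"
    then obtain k where k: "y - k *\<^sub>R w \<in> V" unfolding span_insert spV by blast
    define z where "z = y - k *\<^sub>R w"
    have y: "y = z + k *\<^sub>R w" and zV: "z \<in> V" using k by (auto simp: z_def)
    have o1: "(u - p') \<bullet> z = 0"
      using ou[OF zV] oq[OF zV] by (simp add: p'_def inner_diff_left inner_add_left)
    have o2: "(u - p') \<bullet> w = 0"
    proof (cases "q = 0")
      case True then show ?thesis using e2 by (simp add: p'_def)
    next
      case False
      have uq: "u \<bullet> q = (u - p) \<bullet> q" using pq by (simp add: inner_diff_left)
      have wq: "w = q + pw" by (simp add: q_def)
      have "(u - p') \<bullet> pw = 0"
        using ou[OF pwV] oq[OF pwV] by (simp add: p'_def False inner_diff_left inner_add_left)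
      then have "(u - p') \<bullet> w = (u - p') \<bullet> q"
        by (simp add: wq inner_add_right)
      also have "\<dots> = 0" using False pq by (simp add: p'_def inner_diff_left inner_add_left)
      finally show ?thesis .
    qed
    show "(u - p') \<bullet> y = 0" using o1 o2 by (simp add: y inner_add_right)
  qed
qed

lemma amgm:
  fixes x :: "'a \<Rightarrow> real"
  assumes "finite A" "A \<noteq> {}" "\<And>i. i \<in> A \<Longrightarrow> x i \<ge> 0"
  shows "(\<Prod>i\<in>A. x i) \<le> ((\<Sum>i\<in>A. x i) / card A) ^ card A"
proof (cases "(\<Sum>i\<in>A. x i) = 0")
  case True
  then have "\<forall>i\<in>A. x i = 0" using assms sum_nonneg_eq_0_iff by blast
  then obtain i where "i \<in> A" "x i = 0" using assms(2) by blast
  then have "(\<Prod>i\<in>A. x i) = 0" using assms(1) by (meson prod_zero_iff)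
  then show ?thesis using True by simp
next
  case False
  define c where "c = (\<Sum>i\<in>A. x i) / card A"
  have cardpos: "card A > 0" using assms by (simp add: card_gt_0_iff)
  have "(\<Sum>i\<in>A. x i) > 0" using False assms by (metis order_le_neq_trans sum_nonneg)
  then have cpos: "c > 0" using cardpos by (simp add: c_def)
  have "(\<Prod>i\<in>A. x i / c) \<le> (\<Prod>i\<in>A. exp (x i / c - 1))"
  proof (rule prod_mono)
    fix i assume "i \<in> A"
    then have "x i / c \<ge> 0" using assms cpos by simp
    moreover have "x i / c \<le> exp (x i / c - 1)" using exp_ge_add_one_self[of "x i / c - 1"] by simp
    ultimately show "0 \<le> x i / c \<and> x i / c \<le> exp (x i / c - 1)" by simp
  qed
  also have "\<dots> = exp (\<Sum>i\<in>A. (x i / c - 1))" using assms(1) by (simp add: exp_sum)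
  also have "(\<Sum>i\<in>A. (x i / c - 1)) = (\<Sum>i\<in>A. x i) / c - card A"
    by (simp add: sum_subtractf sum_divide_distrib)
  also have "\<dots> = 0" using False cardpos by (simp add: c_def)
  finally have le1: "(\<Prod>i\<in>A. x i / c) \<le> 1" by simp
  have "(\<Prod>i\<in>A. x i) = c ^ card A * (\<Prod>i\<in>A. x i / c)"
    using cpos by (simp add: prod_dividef power_divide)
  also have "\<dots> \<le> c ^ card A * 1" using le1 cpos by (intro mult_left_mono) auto
  finally show ?thesis by (simp add: c_def)
qed

lemma prod_bound:
  fixes a d P :: "nat \<Rightarrow> real"
  assumes fin: "finite A" and cardA: "card A = m" and mpos: "m > 0"
    and ad: "\<And>i. i \<in> A \<Longrightarrow> (a i)^2 = d i * (P i)^2"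
    and dnn: "\<And>i. i \<in> A \<Longrightarrow> d i \<ge> 0" and Pnn: "\<And>i. i \<in> A \<Longrightarrow> P i \<ge> 0"
    and sumd: "(\<Sum>i\<in>A. d i) \<le> E^2" and Enn: "E \<ge> 0"
  shows "(\<Prod>i\<in>A. \<bar>a i\<bar>) \<le> (E / sqrt m) ^ m * (\<Prod>i\<in>A. P i)"
proof -
  have Ane: "A \<noteq> {}" using cardA mpos by auto
  have abs: "\<bar>a i\<bar> = sqrt (d i) * P i" if "i \<in> A" for i
  proof -
    have "\<bar>a i\<bar> = sqrt ((a i)^2)" by simp
    also have "\<dots> = sqrt (d i) * P i" using ad[OF that] Pnn[OF that] by (simp add: real_sqrt_mult)
    finally show ?thesis .
  qed
  have eq1: "(\<Prod>i\<in>A. \<bar>a i\<bar>) = (\<Prod>i\<in>A. sqrt (d i)) * (\<Prod>i\<in>A. P i)"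
    using abs by (simp add: prod.distrib)
  have eq2: "(\<Prod>i\<in>A. sqrt (d i)) = sqrt (\<Prod>i\<in>A. d i)"
    using fin by (induction A rule: finite_induct) (auto simp: real_sqrt_mult)
  have "(\<Prod>i\<in>A. d i) \<le> ((\<Sum>i\<in>A. d i) / m) ^ m"
    using amgm[OF fin Ane dnn] cardA by simp
  also have "\<dots> \<le> (E^2 / m) ^ m"
  proof -
    have "0 \<le> (\<Sum>i\<in>A. d i)" by (rule sum_nonneg) (rule dnn)
    then show ?thesis using sumd mpos by (intro power_mono divide_right_mono) auto
  qed
  finally have "sqrt (\<Prod>i\<in>A. d i) \<le> sqrt ((E^2 / m) ^ m)" by simp
  also have "\<dots> = (E / sqrt m) ^ m"
    using Enn mpos by (simp add: real_sqrt_power power_divide real_sqrt_divide)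
  finally have "sqrt (\<Prod>i\<in>A. d i) \<le> (E / sqrt m) ^ m" .
  then show ?thesis unfolding eq1 eq2
    by (intro mult_right_mono) (auto intro: prod_nonneg Pnn)
qed

lemma pdir_deriv:
  assumes f: "C1_on U f" and y: "y \<in> U" and b: "b \<in> Basis"
  shows "((\<lambda>t. f (y + t *\<^sub>R b)) has_real_derivative pdir f y b) (at 0)"
proof -
  have "(\<lambda>t. f (y + t *\<^sub>R b)) differentiable (at 0)" using f y b by (simp add: C1_on_def)
  then show ?thesis unfolding pdir_def by (simp add: DERIV_deriv_iff_real_differentiable)
qed

lemma pdir_deriv_at:
  assumes f: "C1_on U f" and y: "y + t *\<^sub>R b \<in> U" and b: "b \<in> Basis"
  shows "((\<lambda>s. f (y + s *\<^sub>R b)) has_real_derivative pdir f (y + t *\<^sub>R b) b) (at t)"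
proof -
  have "((\<lambda>s. f ((y + t *\<^sub>R b) + s *\<^sub>R b)) has_real_derivative pdir f (y + t *\<^sub>R b) b) (at 0)"
    by (rule pdir_deriv[OF f y b])
  moreover have "(\<lambda>s. f ((y + t *\<^sub>R b) + s *\<^sub>R b)) = (\<lambda>s. (\<lambda>s. f (y + s *\<^sub>R b)) (s + t))"
    by (simp add: algebra_simps scaleR_add_left)
  ultimately have "((\<lambda>s. (\<lambda>s. f (y + s *\<^sub>R b)) (s + t)) has_real_derivative pdir f (y + t *\<^sub>R b) b) (at 0)"
    by simp
  then show ?thesis using DERIV_shift[of "\<lambda>s. f (y + s *\<^sub>R b)" _ 0 t] by simp
qed

lemma seg_bound:
  assumes f: "C1_on U f" and b: "b \<in> Basis"
    and seg: "\<And>s. s \<in> closed_segment 0 t \<Longrightarrow> y + s *\<^sub>R b \<in> U \<and> \<bar>pdir f (y + s *\<^sub>R b) b - c\<bar> \<le> \<epsilon>"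
  shows "\<bar>f (y + t *\<^sub>R b) - f y - c * t\<bar> \<le> \<epsilon> * \<bar>t\<bar>"
proof -
  define g where "g s = f (y + s *\<^sub>R b) - c * s" for s
  have der: "(g has_derivative (\<lambda>h. (pdir f (y + s *\<^sub>R b) b - c) * h)) (at s within closed_segment 0 t)"
    if "s \<in> closed_segment 0 t" for s
  proof -
    have "(g has_real_derivative (pdir f (y + s *\<^sub>R b) b - c)) (at s)"
      unfolding g_def using pdir_deriv_at[OF f _ b, of y s] seg[OF that]
      by (auto intro!: derivative_eq_intros)
    then show ?thesis unfolding has_field_derivative_def
      by (rule has_derivative_at_withinI)
  qed
  have on: "onorm (\<lambda>h. (pdir f (y + s *\<^sub>R b) b - c) * h) \<le> \<epsilon>" if "s \<in> closed_segment 0 t" for s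
    using seg[OF that] by (intro onorm_le) (simp add: abs_mult mult_right_mono)
  have "norm (g t - g 0) \<le> \<epsilon> * norm (t - 0)"
    by (rule differentiable_bound[OF convex_closed_segment der on]) auto
  then show ?thesis by (simp add: g_def)
qed

lemma C1_frechet_aux:
  fixes f :: "'a::euclidean_space \<Rightarrow> real"
  assumes U: "open U" and f: "C1_on U f" and z: "z \<in> U" and eps: "\<epsilon> > 0"
  shows "B \<subseteq> Basis \<Longrightarrow> \<exists>\<delta>>0. \<forall>y h. norm (y - z) < \<delta> \<longrightarrow> norm h < \<delta> \<longrightarrow>
     (\<forall>b\<in>Basis - B. h \<bullet> b = 0) \<longrightarrow>
     \<bar>f (y + h) - f y - (\<Sum>b\<in>B. pdir f z b * (h \<bullet> b))\<bar> \<le> \<epsilon> * (\<Sum>b\<in>B. \<bar>h \<bullet> b\<bar>)"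
proof (induction B rule: infinite_finite_induct)
  case (infinite A)
  then show ?case using finite_subset[OF _ finite_Basis] by blast
next
  case empty
  show ?case
  proof (intro exI[of _ 1] conjI allI impI)
    fix y h :: 'a assume "\<forall>b\<in>Basis - {}. h \<bullet> b = 0"
    then have "h = 0" by (simp add: euclidean_all_zero_iff)
    then show "\<bar>f (y + h) - f y - (\<Sum>b\<in>{}. pdir f z b * (h \<bullet> b))\<bar> \<le> \<epsilon> * (\<Sum>b\<in>{}. \<bar>h \<bullet> b\<bar>)" by simp
  qed simp
next
  case (insert c B)
  have cB: "c \<in> Basis" "B \<subseteq> Basis" using insert.prems by auto
  obtain d1 where d1: "d1 > 0" and IH: "\<And>y h. norm (y - z) < d1 \<Longrightarrow> norm h < d1 \<Longrightarrow>
     (\<forall>b\<in>Basis - B. h \<bullet> b = 0) \<Longrightarrow>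
     \<bar>f (y + h) - f y - (\<Sum>b\<in>B. pdir f z b * (h \<bullet> b))\<bar> \<le> \<epsilon> * (\<Sum>b\<in>B. \<bar>h \<bullet> b\<bar>)"
    using insert.IH[OF cB(2)] by blast
  have "continuous_on U (\<lambda>z. pdir f z c)" using f cB by (simp add: C1_on_def)
  then have "isCont (\<lambda>z. pdir f z c) z" using U z by (simp add: continuous_on_eq_continuous_at)
  then obtain d2 where d2: "d2 > 0" and cont: "\<And>x. dist x z < d2 \<Longrightarrow> dist (pdir f x c) (pdir f z c) < \<epsilon>"
    using eps unfolding continuous_at_eps_delta by blast
  obtain r where r: "r > 0" "ball z r \<subseteq> U" using U z open_contains_ball by blast
  define \<delta> where "\<delta> = min d1 (min d2 r / 3)"
  have dpos: "\<delta> > 0" using d1 d2 r by (simp add: \<delta>_def)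
  show ?case
  proof (intro exI[of _ \<delta>] conjI allI impI dpos)
    fix y h :: 'a
    assume yz: "norm (y - z) < \<delta>" and hn: "norm h < \<delta>" and hB: "\<forall>b\<in>Basis - insert c B. h \<bullet> b = 0"
    define h' where "h' = h - (h \<bullet> c) *\<^sub>R c"
    have cc: "c \<bullet> c = 1" using cB by simp
    have h'c: "h' \<bullet> c = 0" using cc by (simp add: h'_def inner_diff_left)
    have h'b: "h' \<bullet> b = h \<bullet> b" if "b \<in> Basis" "b \<noteq> c" for b
      using that cB by (simp add: h'_def inner_diff_left inner_Basis)
    have "h' \<bullet> h' = h \<bullet> h - (h \<bullet> c)^2"
      using cc by (simp add: h'_def inner_diff_left inner_diff_right inner_commute power2_eq_square)
    then have "h' \<bullet> h' \<le> h \<bullet> h" by simp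
    then have nh': "norm h' \<le> norm h" by (simp add: norm_le)
    have hB': "\<forall>b\<in>Basis - B. h' \<bullet> b = 0"
    proof
      fix b assume b: "b \<in> Basis - B"
      show "h' \<bullet> b = 0"
      proof (cases "b = c")
        case True then show ?thesis using h'c by simp
      next
        case False then show ?thesis using b hB h'b by auto
      qed
    qed
    have IH1: "\<bar>f (y + h') - f y - (\<Sum>b\<in>B. pdir f z b * (h \<bullet> b))\<bar> \<le> \<epsilon> * (\<Sum>b\<in>B. \<bar>h \<bullet> b\<bar>)"
    proof -
      have "\<bar>f (y + h') - f y - (\<Sum>b\<in>B. pdir f z b * (h' \<bullet> b))\<bar> \<le> \<epsilon> * (\<Sum>b\<in>B. \<bar>h' \<bullet> b\<bar>)"
        using IH[of y h'] yz hn nh' hB' by (simp add: \<delta>_def)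
      moreover have "\<And>b. b \<in> B \<Longrightarrow> h' \<bullet> b = h \<bullet> b" using h'b cB insert.hyps by auto
      ultimately show ?thesis by simp
    qed
    define t where "t = h \<bullet> c"
    have tn: "\<bar>t\<bar> \<le> norm h" using Basis_le_norm[OF cB(1)] by (simp add: t_def)
    have seg: "(y + h') + s *\<^sub>R c \<in> U \<and> \<bar>pdir f ((y + h') + s *\<^sub>R c) c - pdir f z c\<bar> \<le> \<epsilon>"
      if "s \<in> closed_segment 0 t" for s
    proof -
      have "\<bar>s\<bar> \<le> \<bar>t\<bar>" using that by (auto simp: closed_segment_eq_real_ivl split: if_splits)
      have "norm ((y + h') + s *\<^sub>R c - z) \<le> norm (y - z) + norm h' + norm (s *\<^sub>R c)"
        by (metis (no_types, lifting) add.commute add_diff_eq diff_add_eq norm_triangle_le norm_triangle_ineq order_refl add_mono)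
      also have "norm (s *\<^sub>R c) = \<bar>s\<bar>" using cB by simp
      finally have "norm ((y + h') + s *\<^sub>R c - z) < 3 * \<delta>"
        using yz hn nh' tn \<open>\<bar>s\<bar> \<le> \<bar>t\<bar>\<close> by linarith
      also have "3 * \<delta> \<le> min d2 r" by (auto simp: \<delta>_def min_def)
      finally have dd: "dist ((y + h') + s *\<^sub>R c) z < min d2 r" by (simp add: dist_norm)
      then have "(y + h') + s *\<^sub>R c \<in> U" using r by (auto simp: dist_commute)
      moreover have "dist (pdir f ((y + h') + s *\<^sub>R c) c) (pdir f z c) < \<epsilon>" using dd cont by simp
      ultimately show ?thesis by (simp add: dist_real_def)
    qed
    have S2: "\<bar>f ((y + h') + t *\<^sub>R c) - f (y + h') - pdir f z c * t\<bar> \<le> \<epsilon> * \<bar>t\<bar>"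
      by (rule seg_bound[OF f cB(1) seg])
    have yh: "(y + h') + t *\<^sub>R c = y + h" by (simp add: h'_def t_def)
    have sum1: "(\<Sum>b\<in>insert c B. pdir f z b * (h \<bullet> b)) = pdir f z c * t + (\<Sum>b\<in>B. pdir f z b * (h \<bullet> b))"
      using insert.hyps by (simp add: t_def)
    have sum2: "(\<Sum>b\<in>insert c B. \<bar>h \<bullet> b\<bar>) = \<bar>t\<bar> + (\<Sum>b\<in>B. \<bar>h \<bullet> b\<bar>)"
      using insert.hyps by (simp add: t_def)
    show "\<bar>f (y + h) - f y - (\<Sum>b\<in>insert c B. pdir f z b * (h \<bullet> b))\<bar> \<le> \<epsilon> * (\<Sum>b\<in>insert c B. \<bar>h \<bullet> b\<bar>)"
      unfolding sum1 sum2 using IH1 S2 yh by (simp add: distrib_left)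
  qed
qed

lemma C1_frechet:
  fixes f :: "'a::euclidean_space \<Rightarrow> real"
  assumes U: "open U" and f: "C1_on U f" and z: "z \<in> U"
  shows "(f has_derivative (\<lambda>h. \<Sum>b\<in>Basis. pdir f z b * (h \<bullet> b))) (at z)"
  unfolding has_derivative_at_alt
proof (intro conjI allI impI)
  show "bounded_linear (\<lambda>h. \<Sum>b\<in>Basis. pdir f z b * (h \<bullet> b))"
    by (intro bounded_linear_sum bounded_linear_const_mult bounded_linear_inner_left)
next
  fix e :: real assume e: "e > 0"
  define e' where "e' = e / DIM('a)"
  have e': "e' > 0" using e by (simp add: e'_def)
  obtain d where d: "d > 0" and H: "\<And>y h. norm (y - z) < d \<Longrightarrow> norm h < d \<Longrightarrow>
     (\<forall>b\<in>Basis - Basis. h \<bullet> b = 0) \<Longrightarrow>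
     \<bar>f (y + h) - f y - (\<Sum>b\<in>Basis. pdir f z b * (h \<bullet> b))\<bar> \<le> e' * (\<Sum>b\<in>Basis. \<bar>h \<bullet> b\<bar>)"
    using C1_frechet_aux[OF U f z e' order_refl] by blast
  show "\<exists>d>0. \<forall>y. norm (y - z) < d \<longrightarrow>
      norm (f y - f z - (\<Sum>b\<in>Basis. pdir f z b * ((y - z) \<bullet> b))) \<le> e * norm (y - z)"
  proof (intro exI[of _ d] conjI allI impI d)
    fix y assume y: "norm (y - z) < d"
    have "\<bar>f (z + (y - z)) - f z - (\<Sum>b\<in>Basis. pdir f z b * ((y - z) \<bullet> b))\<bar> \<le> e' * (\<Sum>b\<in>Basis. \<bar>(y - z) \<bullet> b\<bar>)"
      using H[of z "y - z"] y d by simp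
    also have "(\<Sum>b\<in>Basis. \<bar>(y - z) \<bullet> b\<bar>) \<le> DIM('a) * norm (y - z)"
      using sum_bounded_above[of Basis "\<lambda>b. \<bar>(y - z) \<bullet> b\<bar>" "norm (y - z)"] Basis_le_norm by auto
    then have "e' * (\<Sum>b\<in>Basis. \<bar>(y - z) \<bullet> b\<bar>) \<le> e' * (DIM('a) * norm (y - z))"
      using e' by (intro mult_left_mono) auto
    also have "\<dots> = e * norm (y - z)" by (simp add: e'_def)
    finally show "norm (f y - f z - (\<Sum>b\<in>Basis. pdir f z b * ((y - z) \<bullet> b))) \<le> e * norm (y - z)"
      by simp
  qed
qed

lemma grad_line_deriv:
  fixes S :: "'a::euclidean_space \<Rightarrow> real"
  assumes U: "open U" and S: "C2_on U S" and zt: "z0 + t *\<^sub>R w \<in> U"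
  shows "((\<lambda>t. grad_of S (z0 + t *\<^sub>R w)) has_vector_derivative hess_app S (z0 + t *\<^sub>R w) w) (at t)"
proof -
  define D where "D i = (\<Sum>j\<in>Basis. pdir (\<lambda>w. pdir S w i) (z0 + t *\<^sub>R w) j * (w \<bullet> j))" for i
  have lin: "((\<lambda>t. z0 + t *\<^sub>R w) has_derivative (\<lambda>s. s *\<^sub>R w)) (at t)"
    by (auto intro!: derivative_eq_intros)
  have di: "((\<lambda>t. pdir S (z0 + t *\<^sub>R w) i) has_derivative (\<lambda>s. s * D i)) (at t)" if i: "i \<in> Basis" for i
  proof -
    have c1: "C1_on U (\<lambda>z. pdir S z i)" using S i by (simp add: C2_on_def)
    have "((\<lambda>z. pdir S z i) has_derivative (\<lambda>h. \<Sum>j\<in>Basis. pdir (\<lambda>w. pdir S w i) (z0 + t *\<^sub>R w) j * (h \<bullet> j))) (at (z0 + t *\<^sub>R w))"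
      by (rule C1_frechet[OF U c1 zt])
    from diff_chain_at[OF lin this]
    have "(((\<lambda>z. pdir S z i) \<circ> (\<lambda>t. z0 + t *\<^sub>R w)) has_derivative
       ((\<lambda>h. \<Sum>j\<in>Basis. pdir (\<lambda>w. pdir S w i) (z0 + t *\<^sub>R w) j * (h \<bullet> j)) \<circ> (\<lambda>s. s *\<^sub>R w))) (at t)" .
    moreover have "((\<lambda>h. \<Sum>j\<in>Basis. pdir (\<lambda>w. pdir S w i) (z0 + t *\<^sub>R w) j * (h \<bullet> j)) \<circ> (\<lambda>s. s *\<^sub>R w)) = (\<lambda>s. s * D i)"
      by (auto simp: D_def sum_distrib_left algebra_simps)
    ultimately show ?thesis by (simp add: o_def)
  qed
  have "((\<lambda>t. \<Sum>i\<in>Basis. pdir S (z0 + t *\<^sub>R w) i *\<^sub>R i) has_derivative (\<lambda>s. \<Sum>i\<in>Basis. (s * D i) *\<^sub>R i)) (at t)"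
    by (intro has_derivative_sum has_derivative_scaleR_left di)
  moreover have "(\<lambda>s. \<Sum>i\<in>Basis. (s * D i) *\<^sub>R i) = (\<lambda>s. s *\<^sub>R hess_app S (z0 + t *\<^sub>R w) w)"
    by (auto simp: hess_app_def D_def scaleR_sum_right)
  ultimately show ?thesis unfolding has_vector_derivative_def grad_of_def by simp
qed

lemma grad_lip:
  fixes S :: "'a::euclidean_space \<Rightarrow> real"
  assumes U: "open U" and S: "C2_on U S"
    and seg: "\<And>t. t \<in> {0..1} \<Longrightarrow> z0 + t *\<^sub>R w \<in> U"
    and B: "\<And>t. t \<in> {0..1} \<Longrightarrow> norm (hess_app S (z0 + t *\<^sub>R w) w) \<le> B"
  shows "norm (grad_of S (z0 + w) - grad_of S z0) \<le> B"
proof -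
  have der: "((\<lambda>t. grad_of S (z0 + t *\<^sub>R w)) has_derivative (\<lambda>s. s *\<^sub>R hess_app S (z0 + t *\<^sub>R w) w)) (at t within {0..1})"
    if "t \<in> {0..1}" for t
    using grad_line_deriv[OF U S seg[OF that]] unfolding has_vector_derivative_def
    by (rule has_derivative_at_withinI)
  have on: "onorm (\<lambda>s. s *\<^sub>R hess_app S (z0 + t *\<^sub>R w) w) \<le> B" if "t \<in> {0..1}" for t
    using B[OF that] by (intro onorm_le) (simp add: mult.commute[of B] mult_left_mono)
  have "norm (grad_of S (z0 + 1 *\<^sub>R w) - grad_of S (z0 + 0 *\<^sub>R w)) \<le> B * norm (1 - 0 :: real)"
    by (rule differentiable_bound[OF convex_real_interval(5) der on]) auto
  then show ?thesis by simp
qed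

lemma gspace_Suc:
  "gspace dK xs ls (Suc m) = span (insert (dK (xs (Suc m)) (ls (Suc m))) (gspace dK xs ls m))"
proof -
  have "{1..Suc m} = insert (Suc m) {1..m}" by auto
  then show ?thesis unfolding gspace_def by (simp only: image_insert span_insert span_span)
qed

lemma proj_exists: "\<exists>p. isproj (gspace dK xs ls m) (v::'h::real_inner) p"
proof (induction m arbitrary: v)
  case 0
  show ?case by (rule exI[of _ 0]) (simp add: isproj_def gspace_def)
next
  case (Suc m)
  obtain p where p: "isproj (gspace dK xs ls m) v p" using Suc by blast
  obtain pw where pw: "isproj (gspace dK xs ls m) (dK (xs (Suc m)) (ls (Suc m))) pw" using Suc by blast
  have "subspace (gspace dK xs ls m)" by (simp add: gspace_def subspace_span)
  from proj_step(1)[OF this p pw] show ?case unfolding gspace_Suc by blast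
qed

lemma proj_is: "isproj (gspace dK xs ls m) v (orth_proj (gspace dK xs ls m) (v::'h::real_inner))"
proof -
  obtain p where p: "isproj (gspace dK xs ls m) v p" using proj_exists by blast
  have "subspace (gspace dK xs ls m)" by (simp add: gspace_def subspace_span)
  then show ?thesis using proj_unique p by metis
qed

lemma greedy_step:
  fixes u :: "'h::real_inner" and dK :: "'a \<Rightarrow> 'a \<Rightarrow> 'h" and xs ls :: "nat \<Rightarrow> 'a" and m :: nat
  defines "E \<equiv> \<lambda>m. u - orth_proj (gspace dK xs ls m) u"
    and "wm \<equiv> dK (xs (Suc m)) (ls (Suc m))"
  defines "qm \<equiv> wm - orth_proj (gspace dK xs ls m) wm"
  shows "qm = 0 \<Longrightarrow> E m \<bullet> wm = 0 \<and> E (Suc m) = E m"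
    and "qm \<noteq> 0 \<Longrightarrow> norm (E (Suc m))^2 = norm (E m)^2 - (E m \<bullet> wm)^2 / (norm qm)^2"
proof -
  have sV: "subspace (gspace dK xs ls m)" by (simp add: gspace_def subspace_span)
  note st = proj_step[OF sV proj_is[of dK xs ls m u] proj_is[of dK xs ls m wm]]
  define p' where "p' = orth_proj (gspace dK xs ls m) u + (if qm = 0 then 0 else ((u \<bullet> qm) / (qm \<bullet> qm)) *\<^sub>R qm)"
  have "isproj (gspace dK xs ls (Suc m)) u p'"
    using st(1) unfolding gspace_Suc p'_def qm_def wm_def by simp
  then have eq: "orth_proj (gspace dK xs ls (Suc m)) u = p'"
    by (rule proj_unique[rotated]) (simp add: gspace_def subspace_span)
  show "qm = 0 \<Longrightarrow> E m \<bullet> wm = 0 \<and> E (Suc m) = E m"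
    using st(3,5) eq by (simp add: E_def p'_def qm_def)
  show "qm \<noteq> 0 \<Longrightarrow> norm (E (Suc m))^2 = norm (E m)^2 - (E m \<bullet> wm)^2 / (norm qm)^2"
    using st(4) eq by (simp add: E_def p'_def qm_def)
qed

lemma tele: "(\<Sum>i = a..<b. (F i::real) - F (Suc i)) = F a - F b" if "a \<le> b"
  using sum_Suc_diff'[OF that, of "\<lambda>i. - F i"] by simp

lemma root_bound:
  fixes x y Q :: real and m :: nat
  assumes "x \<ge> 0" "y \<ge> 0" "Q \<ge> 0" "m > 0" "x ^ m \<le> y ^ m * Q"
  shows "x \<le> y * Q powr (1 / real m)"
proof -
  have "(Q powr (1 / real m)) ^ m = Q"
  proof (cases "Q = 0")
    case True then show ?thesis using assms by simp
  next
    case False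
    then have "(Q powr (1 / real m)) ^ m = Q powr (1 / real m * m)"
      using assms by (simp add: powr_realpow[symmetric] powr_powr)
    also have "\<dots> = Q" using assms False by simp
    finally show ?thesis .
  qed
  then have "x ^ m \<le> (y * Q powr (1 / real m)) ^ m" using assms by (simp add: power_mult_distrib)
  moreover obtain k where "m = Suc k" using assms(4) gr0_implies_Suc by blast
  moreover have "y * Q powr (1 / real m) \<ge> 0" using assms by simp
  ultimately show ?thesis using power_le_imp_le_base[of x k "y * Q powr (1 / real m)"] by simp
qed

lemma basis_coord:
  fixes c :: "'a::euclidean_space \<Rightarrow> real"
  assumes "b \<in> Basis"
  shows "(\<Sum>b'\<in>Basis. c b' *\<^sub>R b') \<bullet> b = c b"
  using assms by (simp add: inner_sum_left inner_Basis if_distrib sum.delta cong: if_cong)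

lemma norm_coord_bound:
  fixes x :: "'a::euclidean_space"
  assumes "\<And>b. b \<in> Basis \<Longrightarrow> \<bar>x \<bullet> b\<bar> \<le> A"
  shows "norm x \<le> sqrt (DIM('a)) * A"
proof -
  have A0: "A \<ge> 0"
  proof -
    obtain b :: 'a where "b \<in> Basis" using nonempty_Basis by blast
    then show ?thesis using assms[of b] by linarith
  qed
  have "norm x = sqrt (\<Sum>b\<in>Basis. (x \<bullet> b)^2)"
    by (simp add: norm_eq_sqrt_inner euclidean_inner[of x x] power2_eq_square)
  also have "(\<Sum>b\<in>Basis. (x \<bullet> b)^2) \<le> DIM('a) * A^2"
    using sum_bounded_above[of Basis "\<lambda>b. (x \<bullet> b)^2" "A^2"] assms
  proof -
    have "(x \<bullet> b)^2 \<le> A^2" if "b \<in> Basis" for b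
      using assms[OF that] by (simp add: abs_le_square_iff[symmetric] A0)
    then show ?thesis using sum_bounded_above[of Basis "\<lambda>b. (x \<bullet> b)^2" "A^2"] by simp
  qed
  finally show ?thesis using A0 by (simp add: real_sqrt_mult)
qed

lemma Jmat_diff: "Jmat (a - b) = Jmat a - Jmat b"
  by (simp add: Jmat_def)
lemma norm_Jmat: "norm (Jmat a) = norm a"
  by (cases a) (simp add: Jmat_def norm_Pair add.commute)
lemma I2_diff: "I2 a - I2 b = I2 (a - b)" by (simp add: I2_def)
lemma I2_lin: "I2 (a + t *\<^sub>R b) = I2 a + t *\<^sub>R I2 b" by (simp add: I2_def)
lemma bl_I2: "bounded_linear (I2 :: 'n::finite ps \<Rightarrow> 'n ps)"
proof -
  have "I2 = (\<lambda>x::'n ps. (0::real^'n, snd x))" by (auto simp: I2_def)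
  moreover have "bounded_linear (\<lambda>x::'n ps. (0::real^'n, snd x))"
    by (intro bounded_linear_Pair bounded_linear_zero bounded_linear_snd)
  ultimately show ?thesis by simp
qed
lemma bl_hess: "bounded_linear (\<lambda>v. hess_app S z v)"
  unfolding hess_app_def
  by (intro bounded_linear_sum bounded_linear_scaleR_const bounded_linear_sum bounded_linear_const_mult bounded_linear_inner_left)

theorem theorem2:
  fixes dT L_S :: real and D K \<Omega> :: "'n::finite ps set" and Phi :: "'n ps \<Rightarrow> 'n ps"
    and H S :: "'n ps \<Rightarrow> real"
    and k :: "'n ps \<Rightarrow> 'n ps \<Rightarrow> real"
    and kx :: "'n ps \<Rightarrow> 'h::{real_inner,complete_space}"
    and dK :: "'n ps \<Rightarrow> 'n ps \<Rightarrow> 'h" and u :: 'h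
    and xs ls :: "nat \<Rightarrow> 'n ps" and im :: "nat \<Rightarrow> nat"
    and X :: "nat \<Rightarrow> 'n ps \<Rightarrow> 'n ps" and M :: nat
  defines "s \<equiv> \<lambda>m. orth_proj (gspace dK xs ls m) u"
    and "e \<equiv> \<lambda>m. u - orth_proj (gspace dK xs ls m) u"
    and "P \<equiv> \<lambda>m x l. norm (dK x l - orth_proj (gspace dK xs ls m) (dK x l))"
  assumes dT_pos: "dT > 0"
    and flow: "is_ham_flow H dT D Phi"
    and Omega_def: "\<Omega> = {I1 x0 + I2 (Phi x0) | x0. x0 \<in> D}"
    and Omega_open: "open \<Omega>" and Omega_convex: "convex \<Omega>"
    and k_spd: "spd_kernel \<Omega> k"
    and k_C2: "C2_on (\<Omega> \<times> \<Omega>) (\<lambda>(x, y). k x y)"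
    and rkhs: "is_rkhs \<Omega> k kx"
    and dK_prop: "\<forall>x\<in>\<Omega>. \<forall>l\<in>Basis.
        (\<forall>y\<in>\<Omega>. fn_of kx (dK x l) y = pdir (k y) x l) \<and>
        (\<forall>f. ((\<lambda>t. fn_of kx f (x + t *\<^sub>R l)) has_real_derivative (f \<bullet> dK x l)) (at 0))"
    and S_C2: "C2_on \<Omega> S"
    and S_in_H: "\<forall>z\<in>\<Omega>. S z = fn_of kx u z"
    and S_gen: "gen_fun_II dT D Phi \<Omega> S"
    and greedy: "\<forall>m. xs (Suc m) \<in> \<Omega> \<and> ls (Suc m) \<in> Basis \<and>
        (\<forall>x\<in>\<Omega>. \<forall>l\<in>Basis. \<bar>pdir (fn_of kx (e m)) x l\<bar>
                             \<le> \<bar>pdir (fn_of kx (e m)) (xs (Suc m)) (ls (Suc m))\<bar>)"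
    and im_choice: "\<forall>m\<ge>1. im m \<in> {m+1..2*m} \<and>
        (\<forall>i\<in>{m+1..2*m}. Linf_grad \<Omega> (fn_of kx (e (im m))) \<le> Linf_grad \<Omega> (fn_of kx (e i)))"
    and K_compact: "compact K"
    and M_ge: "M \<ge> 1"
    and solv_exact: "\<forall>x0\<in>K. I1 x0 + I2 (Phi x0) \<in> \<Omega> \<and>
        Phi x0 = x0 + dT *\<^sub>R Jmat (grad_of S (I1 x0 + I2 (Phi x0))) \<and>
        (\<forall>y. I1 x0 + I2 y \<in> \<Omega> \<and> y = x0 + dT *\<^sub>R Jmat (grad_of S (I1 x0 + I2 y)) \<longrightarrow> y = Phi x0)"
    and solv_approx: "\<forall>m\<ge>M. \<forall>x0\<in>K. I1 x0 + I2 (X m x0) \<in> \<Omega> \<and>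
        X m x0 = x0 + dT *\<^sub>R Jmat (grad_of (fn_of kx (s (im m))) (I1 x0 + I2 (X m x0))) \<and>
        (\<forall>y. I1 x0 + I2 y \<in> \<Omega> \<and> y = x0 + dT *\<^sub>R Jmat (grad_of (fn_of kx (s (im m))) (I1 x0 + I2 y))
              \<longrightarrow> y = X m x0)"
    and L_S_pos: "L_S > 0"
    and L_S_bdd: "bdd_above ((\<lambda>(x0, y). onorm (\<lambda>v. hess_app S (I1 x0 + I2 y) (I2 v)))
                     ` {(x0, y). x0 \<in> K \<and> I1 x0 + I2 y \<in> \<Omega>})"
    and L_S_def: "(SUP (x0, y)\<in>{(x0, y). x0 \<in> K \<and> I1 x0 + I2 y \<in> \<Omega>}.
                     onorm (\<lambda>v. hess_app S (I1 x0 + I2 y) (I2 v))) = L_S"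
    and dT_small: "dT < 1 / L_S"
  shows "\<exists>C>0. \<forall>m\<ge>M. \<forall>x0\<in>K.
           norm (X m x0 - Phi x0)
             \<le> C * dT * sqrt (2 * real CARD('n)) * real m powr (-1/2) * norm (e (Suc m))
                * (\<Prod>i\<in>{m+1..2*m}. P i (xs (Suc i)) (ls (Suc i))) powr (1 / real m)"
proof -
  have Omega_open': "open \<Omega>" by (rule Omega_open)
  have pdir_fn: "pdir (fn_of kx f) x l = f \<bullet> dK x l" if "x \<in> \<Omega>" "l \<in> Basis" for f x l
    using dK_prop that unfolding pdir_def by (auto intro!: DERIV_imp_deriv)
  have pdir_S: "pdir S x l = u \<bullet> dK x l" if x: "x \<in> \<Omega>" and l: "l \<in> Basis" for x l
  proof -
    have d: "((\<lambda>t. fn_of kx u (x + t *\<^sub>R l)) has_real_derivative (u \<bullet> dK x l)) (at 0)"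
      using dK_prop x l by blast
    have op: "open ((\<lambda>t. x + t *\<^sub>R l) -` \<Omega>)"
      by (rule continuous_open_vimage[OF Omega_open]) (auto intro!: continuous_intros)
    have "((\<lambda>t. S (x + t *\<^sub>R l)) has_real_derivative (u \<bullet> dK x l)) (at 0)"
      by (rule has_field_derivative_transform_within_open[OF d op]) (use x S_in_H in auto)
    then show ?thesis unfolding pdir_def by (rule DERIV_imp_deriv)
  qed
  have grad_fn: "grad_of (fn_of kx f) z = (\<Sum>b\<in>Basis. (f \<bullet> dK z b) *\<^sub>R b)" if "z \<in> \<Omega>" for f z
    unfolding grad_of_def using pdir_fn[OF that] by simp
  have grad_S: "grad_of S z = (\<Sum>b\<in>Basis. (u \<bullet> dK z b) *\<^sub>R b)" if "z \<in> \<Omega>" for z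
    unfolding grad_of_def using pdir_S[OF that] by simp
  define w where "w m = dK (xs (Suc m)) (ls (Suc m))" for m
  define q where "q m = w m - orth_proj (gspace dK xs ls m) (w m)" for m
  define a where "a m = e m \<bullet> w m" for m
  define dd where "dd m = (if q m = 0 then 0 else (a m)^2 / (norm (q m))^2)" for m
  have Pq: "P m (xs (Suc m)) (ls (Suc m)) = norm (q m)" for m by (simp add: P_def q_def w_def)
  have st1: "q m = 0 \<Longrightarrow> a m = 0 \<and> e (Suc m) = e m" for m
    using greedy_step(1)[where u=u and dK=dK and xs=xs and ls=ls and m=m] unfolding a_def e_def q_def w_def by simp
  have st2: "q m \<noteq> 0 \<Longrightarrow> norm (e (Suc m))^2 = norm (e m)^2 - (a m)^2 / (norm (q m))^2" for m
    using greedy_step(2)[where u=u and dK=dK and xs=xs and ls=ls and m=m] unfolding a_def e_def q_def w_def by simp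
  have dd_rec: "dd m = norm (e m)^2 - norm (e (Suc m))^2" for m
    using st1[of m] st2[of m] by (cases "q m = 0") (auto simp: dd_def)
  have dd_nn: "dd m \<ge> 0" for m by (simp add: dd_def)
  have a_dd: "(a m)^2 = dd m * (norm (q m))^2" for m
    using st1[of m] by (cases "q m = 0") (auto simp: dd_def)
  have a_pdir: "a i = pdir (fn_of kx (e i)) (xs (Suc i)) (ls (Suc i))" for i
    using pdir_fn greedy by (simp add: a_def w_def)
  have Linf_b: "Linf_grad \<Omega> (fn_of kx (e i)) \<le> ereal (sqrt (2 * real CARD('n)) * \<bar>a i\<bar>)" for i
    unfolding Linf_grad_def
  proof (rule SUP_least)
    fix z assume z: "z \<in> \<Omega>"
    have "norm (grad_of (fn_of kx (e i)) z) \<le> sqrt (DIM('n ps)) * \<bar>a i\<bar>"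
    proof (rule norm_coord_bound)
      fix b :: "'n ps" assume b: "b \<in> Basis"
      have "grad_of (fn_of kx (e i)) z \<bullet> b = pdir (fn_of kx (e i)) z b"
        unfolding grad_of_def by (rule basis_coord[OF b])
      then show "\<bar>grad_of (fn_of kx (e i)) z \<bullet> b\<bar> \<le> \<bar>a i\<bar>"
        using greedy z b a_pdir by simp
    qed
    then show "ereal (norm (grad_of (fn_of kx (e i)) z)) \<le> ereal (sqrt (2 * real CARD('n)) * \<bar>a i\<bar>)"
      by simp
  qed
  have LS1: "dT * L_S < 1" using dT_small L_S_pos by (simp add: field_simps)
  define C where "C = 1 / (1 - dT * L_S)"
  have Cpos: "C > 0" using LS1 by (simp add: C_def)
  show ?thesis
  proof (intro exI[of _ C] conjI allI impI ballI Cpos)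
    fix m x0 assume mM: "m \<ge> M" and x0: "x0 \<in> K"
    have m1: "m \<ge> 1" using mM M_ge by simp
    define j where "j = im m"
    have j: "j \<in> {m+1..2*m}" and jmin: "\<And>i. i \<in> {m+1..2*m} \<Longrightarrow> Linf_grad \<Omega> (fn_of kx (e j)) \<le> Linf_grad \<Omega> (fn_of kx (e i))"
      using im_choice m1 by (auto simp: j_def)
    define zs where "zs = I1 x0 + I2 (Phi x0)"
    define zm where "zm = I1 x0 + I2 (X m x0)"
    have zs: "zs \<in> \<Omega>" and Phi_eq: "Phi x0 = x0 + dT *\<^sub>R Jmat (grad_of S zs)"
      using solv_exact x0 by (auto simp: zs_def)
    have zm: "zm \<in> \<Omega>" and X_eq: "X m x0 = x0 + dT *\<^sub>R Jmat (grad_of (fn_of kx (s j)) zm)"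
      using solv_approx x0 mM by (auto simp: zm_def j_def)
    have sj: "s j = u - e j" by (simp add: s_def e_def)
    have grad_s: "grad_of (fn_of kx (s j)) zm = grad_of S zm - grad_of (fn_of kx (e j)) zm"
      using grad_fn[OF zm] grad_S[OF zm] unfolding sj
      by (simp add: inner_diff_left scaleR_diff_left sum_subtractf)
    define v where "v = X m x0 - Phi x0"
    define g where "g = norm (grad_of (fn_of kx (e j)) zm)"
    have v_eq: "v = dT *\<^sub>R Jmat (grad_of S zm - grad_of S zs) - dT *\<^sub>R Jmat (grad_of (fn_of kx (e j)) zm)"
      unfolding v_def by (subst X_eq, subst Phi_eq) (simp add: grad_s Jmat_diff algebra_simps)
    have zm_eq: "zm = zs + I2 v" by (simp add: zm_def zs_def v_def I2_def)
    have seg: "zs + t *\<^sub>R I2 v \<in> \<Omega>" if t: "t \<in> {0..1}" for t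
    proof -
      have "(1 - t) *\<^sub>R zs + t *\<^sub>R zm \<in> \<Omega>" using convexD_alt[OF Omega_convex zs zm] t by auto
      then show ?thesis by (simp add: zm_eq algebra_simps)
    qed
    have hb: "norm (hess_app S (zs + t *\<^sub>R I2 v) (I2 v)) \<le> L_S * norm v" if t: "t \<in> {0..1}" for t
    proof -
      have pt: "zs + t *\<^sub>R I2 v = I1 x0 + I2 (Phi x0 + t *\<^sub>R v)" by (simp add: zs_def I2_lin)
      have mem: "(x0, Phi x0 + t *\<^sub>R v) \<in> {(x0, y). x0 \<in> K \<and> I1 x0 + I2 y \<in> \<Omega>}"
        using x0 seg[OF t] pt by simp
      have "(\<lambda>(x0, y). onorm (\<lambda>v. hess_app S (I1 x0 + I2 y) (I2 v))) (x0, Phi x0 + t *\<^sub>R v) \<le> L_S"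
        using cSUP_upper[OF mem L_S_bdd] L_S_def by simp
      then have on: "onorm (\<lambda>y. hess_app S (zs + t *\<^sub>R I2 v) (I2 y)) \<le> L_S" using pt by simp
      have bl: "bounded_linear (\<lambda>y. hess_app S (zs + t *\<^sub>R I2 v) (I2 y))"
        using bounded_linear_compose[OF bl_hess[of S "zs + t *\<^sub>R I2 v"] bl_I2] by (simp add: o_def)
      have "norm (hess_app S (zs + t *\<^sub>R I2 v) (I2 v)) \<le> onorm (\<lambda>y. hess_app S (zs + t *\<^sub>R I2 v) (I2 y)) * norm v"
        by (rule onorm[OF bl])
      also have "\<dots> \<le> L_S * norm v" using on by (intro mult_right_mono) auto
      finally show ?thesis .
    qed
    have lip: "norm (grad_of S zm - grad_of S zs) \<le> L_S * norm v"
      using grad_lip[OF Omega_open S_C2 seg hb] by (simp add: zm_eq)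
    have "norm v \<le> norm (dT *\<^sub>R Jmat (grad_of S zm - grad_of S zs)) + norm (dT *\<^sub>R Jmat (grad_of (fn_of kx (e j)) zm))"
      unfolding v_eq by (rule norm_triangle_ineq4)
    also have "\<dots> = dT * norm (grad_of S zm - grad_of S zs) + dT * g"
      using dT_pos by (simp add: norm_Jmat g_def)
    also have "\<dots> \<le> dT * (L_S * norm v) + dT * g"
      using lip dT_pos by simp
    finally have "(1 - dT * L_S) * norm v \<le> dT * g" by (simp add: algebra_simps)
    then have vb: "norm v \<le> C * dT * g" using LS1 by (simp add: C_def field_simps)
    define A where "A = {m+1..2*m}"
    have finA: "finite A" and cardA: "card A = m" by (auto simp: A_def)
    have gb: "g \<le> sqrt (2 * real CARD('n)) * \<bar>a i\<bar>" if "i \<in> A" for i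
    proof -
      have "ereal g \<le> Linf_grad \<Omega> (fn_of kx (e j))"
        unfolding Linf_grad_def g_def using zm by (rule SUP_upper2) simp
      also have "\<dots> \<le> Linf_grad \<Omega> (fn_of kx (e i))" using jmin that by (simp add: A_def)
      also have "\<dots> \<le> ereal (sqrt (2 * real CARD('n)) * \<bar>a i\<bar>)" by (rule Linf_b)
      finally show ?thesis by simp
    qed
    define E where "E = norm (e (Suc m))"
    define Q where "Q = (\<Prod>i\<in>A. norm (q i))"
    have sumd: "(\<Sum>i\<in>A. dd i) \<le> E^2"
    proof -
      have "A = {Suc m..<Suc (2*m)}" by (auto simp: A_def)
      then have "(\<Sum>i\<in>A. dd i) = (\<Sum>i = Suc m..<Suc (2*m). norm (e i)^2 - norm (e (Suc i))^2)"
        by (simp add: dd_rec)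
      also have "\<dots> = norm (e (Suc m))^2 - norm (e (Suc (2*m)))^2" by (rule tele) simp
      finally show ?thesis by (simp add: E_def)
    qed
    have pa: "(\<Prod>i\<in>A. \<bar>a i\<bar>) \<le> (E / sqrt m) ^ m * Q"
      unfolding Q_def by (rule prod_bound[OF finA cardA _ a_dd dd_nn _ sumd]) (use m1 in \<open>auto simp: E_def\<close>)
    have "g ^ m = (\<Prod>i\<in>A. g)" using cardA by simp
    also have "\<dots> \<le> (\<Prod>i\<in>A. sqrt (2 * real CARD('n)) * \<bar>a i\<bar>)"
      by (rule prod_mono) (use gb in \<open>auto simp: g_def\<close>)
    also have "\<dots> = sqrt (2 * real CARD('n)) ^ m * (\<Prod>i\<in>A. \<bar>a i\<bar>)"
      using cardA by (simp add: prod.distrib)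
    also have "\<dots> \<le> sqrt (2 * real CARD('n)) ^ m * ((E / sqrt m) ^ m * Q)"
      using pa by (intro mult_left_mono) auto
    also have "\<dots> = (sqrt (2 * real CARD('n)) * (E / sqrt m)) ^ m * Q"
      by (simp only: power_mult_distrib mult.assoc)
    finally have gm: "g ^ m \<le> (sqrt (2 * real CARD('n)) * (E / sqrt m)) ^ m * Q" .
    have groot: "g \<le> sqrt (2 * real CARD('n)) * (E / sqrt m) * Q powr (1 / real m)"
      by (rule root_bound[OF _ _ _ _ gm]) (use m1 in \<open>auto simp: g_def E_def Q_def intro: prod_nonneg\<close>)
    have mpow: "real m powr (-1/2) = 1 / sqrt m"
      using m1 by (simp add: powr_minus_divide powr_half_sqrt)
    have Peq: "(\<Prod>i\<in>{m+1..2*m}. P i (xs (Suc i)) (ls (Suc i))) = Q"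
      by (simp add: Q_def A_def Pq)
    have "norm (X m x0 - Phi x0) \<le> C * dT * g" using vb by (simp add: v_def)
    also have "\<dots> \<le> C * dT * (sqrt (2 * real CARD('n)) * (E / sqrt m) * Q powr (1 / real m))"
      using groot Cpos dT_pos by (intro mult_left_mono) auto
    also have "\<dots> = C * dT * sqrt (2 * real CARD('n)) * real m powr (-1/2) * norm (e (Suc m))
                * (\<Prod>i\<in>{m+1..2*m}. P i (xs (Suc i)) (ls (Suc i))) powr (1 / real m)"
      unfolding mpow Peq by (simp add: E_def)
    finally show "norm (X m x0 - Phi x0)
             \<le> C * dT * sqrt (2 * real CARD('n)) * real m powr (-1/2) * norm (e (Suc m))
                * (\<Prod>i\<in>{m+1..2*m}. P i (xs (Suc i)) (ls (Suc i))) powr (1 / real m)" .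
  qed
qed

end
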